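(* Let $X\in\mathbb{Z}^{d\times N}$ be a matrix of full rank $d$ in $B$-basic form, $X=(B\,|\,A)$ with $B\in\mathbb{Z}^{d\times d}$ a diagonal matrix of full rank with non-negative entries and $A\in\mathbb{Z}^{d\times(N-d)}$ (columns indexed by $d+1,\dots,N$). Then, up to sign, every non-zero subdeterminant of $A$ is determined by the arithmetic matroid $\mathcal{A}(X)$: precisely, if $X'=(B'\,|\,A')\in\mathbb{Z}^{d\times N}$ is also in $B$-basic form (with $B'$ diagonal of full rank with non-negative entries) and represents the same arithmetic matroid as $X$, then for all $I\subseteq[d]$ and $J\subseteq\{d+1,\dots,N\}$ with $|I|=|J|$ such that the submatrix $A_{I,J}$ of $A$ with rows $I$ and columns $J$ has $\det(A_{I,J})\neq 0$, we have $|\det(A_{I,J})|=|\det(A'_{I,J})|$.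
   Context: The arithmetic matroid $\mathcal{A}(X)$ represented by $X\in\mathbb{Z}^{d\times N}$ with columns $x_1,\dots,x_N$ is $([N],\operatorname{rk},m)$ where $\operatorname{rk}(S)$ is the dimension of the real span $\langle S\rangle_{\mathbb{R}}$ of $\{x_e:e\in S\}$ and $m(S)=|(\langle S\rangle_{\mathbb{R}}\cap\mathbb{Z}^d)/\langle S\rangle|$, with $\langle S\rangle$ the subgroup of $\mathbb{Z}^d$ generated by $\{x_e:e\in S\}$. *)

theory Defs
  imports "Jordan_Normal_Form.DL_Submatrix" "Jordan_Normal_Form.VS_Connect"
begin

text \<open>Integer matrices are JNF matrices of type int mat with 0-based indices:
  rows 0..<d, columns (ground set of the matroid) 0..<N.\<close>

definition real_col_span :: "int mat \<Rightarrow> nat set \<Rightarrow> real vec set" where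
  "real_col_span X S =
     module.span class_ring (module_vec TYPE(real) (dim_row X))
       ((\<lambda>e. map_vec real_of_int (col X e)) ` S)"

definition am_rk :: "int mat \<Rightarrow> nat set \<Rightarrow> nat" where
  "am_rk X S = vectorspace.dim class_ring
     ((module_vec TYPE(real) (dim_row X))\<lparr>carrier := real_col_span X S\<rparr>)"

definition int_col_span :: "int mat \<Rightarrow> nat set \<Rightarrow> int vec set" where
  "int_col_span X S =
     {v. \<exists>c :: nat \<Rightarrow> int. v = vec (dim_row X) (\<lambda>i. \<Sum>e\<in>S. c e * X $$ (i, e))}"

definition int_points_of_span :: "int mat \<Rightarrow> nat set \<Rightarrow> int vec set" where
  "int_points_of_span X S =
     {v \<in> carrier_vec (dim_row X). map_vec real_of_int v \<in> real_col_span X S}"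

definition am_mult :: "int mat \<Rightarrow> nat set \<Rightarrow> nat" where
  "am_mult X S = card {{v + w | w. w \<in> int_col_span X S} | v. v \<in> int_points_of_span X S}"

definition same_arith_matroid :: "int mat \<Rightarrow> int mat \<Rightarrow> bool" where
  "same_arith_matroid X X' \<longleftrightarrow> dim_col X = dim_col X' \<and>
     (\<forall>S. S \<subseteq> {0..<dim_col X} \<longrightarrow> am_rk X S = am_rk X' S \<and> am_mult X S = am_mult X' S)"

definition B_basic :: "int mat \<Rightarrow> bool" where
  "B_basic X \<longleftrightarrow> dim_row X \<le> dim_col X \<and>
     (\<forall>i<dim_row X. \<forall>j<dim_row X. i \<noteq> j \<longrightarrow> X $$ (i, j) = 0) \<and>
     (\<forall>i<dim_row X. X $$ (i, i) \<ge> 0) \<and>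
     det (submatrix X {0..<dim_row X} {0..<dim_row X}) \<noteq> 0"

end

theory Submission
  imports Defs "Jordan_Normal_Form.Column_Operations" "Jordan_Normal_Form.DL_Rank"
begin

lemma coset_count:
  fixes L P R :: "int vec set"
  assumes LP: "L \<subseteq> carrier_vec n" and PC: "P \<subseteq> carrier_vec n"
    and L0: "0\<^sub>v n \<in> L" and Ladd: "\<And>x y. x \<in> L \<Longrightarrow> y \<in> L \<Longrightarrow> x + y \<in> L"
    and Lneg: "\<And>x. x \<in> L \<Longrightarrow> - x \<in> L"
    and RP: "R \<subseteq> P"
    and ex: "\<And>p. p \<in> P \<Longrightarrow> \<exists>r\<in>R. p - r \<in> L"
    and un: "\<And>r r'. r \<in> R \<Longrightarrow> r' \<in> R \<Longrightarrow> r - r' \<in> L \<Longrightarrow> r = r'"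
  shows "card {{v + w | w. w \<in> L} | v. v \<in> P} = card R"
proof -
  define cs where "cs v = {v + w | w. w \<in> L}" for v
  have eqc: "cs p = cs r" if "p \<in> carrier_vec n" "r \<in> carrier_vec n" "p - r \<in> L" for p r
  proof -
    have "cs p \<subseteq> cs r" if "p \<in> carrier_vec n" "r \<in> carrier_vec n" "p - r \<in> L" for p r
    proof
      fix x assume "x \<in> cs p"
      then obtain w where w: "w \<in> L" "x = p + w" unfolding cs_def by auto
      have wc: "w \<in> carrier_vec n" using w LP by auto
      have "x = r + ((p - r) + w)" using w wc that by (intro eq_vecI, auto)
      moreover have "(p - r) + w \<in> L" using Ladd w that by auto
      ultimately show "x \<in> cs r" unfolding cs_def by auto
    qed
    moreover have "r - p \<in> L"
    proof -
      have "r - p = - (p - r)" using that by (intro eq_vecI, auto)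
      then show ?thesis using Lneg that by auto
    qed
    ultimately show ?thesis using that by blast
  qed
  have "{{v + w | w. w \<in> L} | v. v \<in> P} = cs ` P" unfolding cs_def by (rule Setcompr_eq_image)
  also have "\<dots> = cs ` R"
  proof
    show "cs ` R \<subseteq> cs ` P" using RP by auto
    show "cs ` P \<subseteq> cs ` R"
    proof
      fix x assume "x \<in> cs ` P"
      then obtain p where p: "p \<in> P" "x = cs p" by auto
      obtain r where r: "r \<in> R" "p - r \<in> L" using ex[OF p(1)] by auto
      have "cs p = cs r" using eqc[OF _ _ r(2)] p r RP PC by auto
      then show "x \<in> cs ` R" using p r by auto
    qed
  qed
  also have "card \<dots> = card R"
  proof (rule card_image, rule inj_onI)
    fix r r' assume r: "r \<in> R" "r' \<in> R" "cs r = cs r'"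
    have rc: "r \<in> carrier_vec n" "r' \<in> carrier_vec n" using r RP PC by auto
    have "r + 0\<^sub>v n \<in> cs r" using L0 unfolding cs_def by auto
    then have "r \<in> cs r'" using rc r(3) by simp
    then obtain w where w: "w \<in> L" "r = r' + w" unfolding cs_def by auto
    have "r - r' = w" using w LP rc by (intro eq_vecI, auto)
    then show "r = r'" using un r w by auto
  qed
  finally show ?thesis .
qed

lemma card_box:
  fixes u :: "nat \<Rightarrow> int"
  shows "card {v :: int vec. v \<in> carrier_vec n \<and> (\<forall>i<n. 0 \<le> v $ i \<and> v $ i < u i)}
     = (\<Prod>i<n. nat (u i))"
proof -
  let ?R = "{v :: int vec. v \<in> carrier_vec n \<and> (\<forall>i<n. 0 \<le> v $ i \<and> v $ i < u i)}"
  let ?Q = "PiE {..<n} (\<lambda>i. {0..<u i})"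
  have "bij_betw (\<lambda>v. restrict (\<lambda>i. v $ i) {..<n}) ?R ?Q"
  proof (rule bij_betw_byWitness[where f' = "\<lambda>f. vec n f"])
    show "\<forall>a\<in>?R. vec n (restrict (\<lambda>i. a $ i) {..<n}) = a" by (auto intro!: eq_vecI)
    show "\<forall>a'\<in>?Q. restrict (\<lambda>i. vec n a' $ i) {..<n} = a'"
    proof
      fix f assume f: "f \<in> ?Q"
      show "restrict (\<lambda>i. vec n f $ i) {..<n} = f"
      proof
        fix i show "restrict (\<lambda>i. vec n f $ i) {..<n} i = f i"
          using f by (cases "i < n", auto simp: PiE_iff extensional_def)
      qed
    qed
    show "(\<lambda>v. restrict (\<lambda>i. v $ i) {..<n}) ` ?R \<subseteq> ?Q"
    proof (rule image_subsetI)
      fix v assume v: "v \<in> ?R"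
      show "restrict (\<lambda>i. v $ i) {..<n} \<in> ?Q" unfolding restrict_PiE_iff using v by auto
    qed
    show "vec n ` ?Q \<subseteq> ?R"
    proof
      fix v assume "v \<in> vec n ` ?Q"
      then obtain f where f: "f \<in> ?Q" "v = vec n f" by auto
      have "\<forall>i<n. f i \<in> {0..<u i}" using f(1) by (auto simp: PiE_iff)
      then show "v \<in> ?R" using f(2) by auto
    qed
  qed
  then have "card ?R = card ?Q" by (rule bij_betw_same_card)
  also have "\<dots> = (\<Prod>i<n. nat (u i))" by (simp add: card_PiE)
  finally show ?thesis .
qed

lemma bij_pick: assumes "finite S" shows "bij_betw (pick S) {..<card S} S"
proof (rule bij_betw_imageI)
  show "inj_on (pick S) {..<card S}"
  proof (rule inj_onI)
    fix x y assume xy: "x \<in> {..<card S}" "y \<in> {..<card S}" "pick S x = pick S y"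
    show "x = y"
    proof (rule linorder_cases[of x y])
      assume "x < y" then have "pick S x < pick S y" using pick_mono_le[of y S x] xy by auto
      then show ?thesis using xy by auto
    next
      assume "y < x" then have "pick S y < pick S x" using pick_mono_le[of x S y] xy by auto
      then show ?thesis using xy by auto
    qed
  qed
  show "pick S ` {..<card S} = S"
  proof
    show "pick S ` {..<card S} \<subseteq> S" using pick_in_set_le by blast
    show "S \<subseteq> pick S ` {..<card S}"
    proof
      fix e assume e: "e \<in> S"
      have lt: "card {a\<in>S. a < e} < card S" by (rule psubset_card_mono[OF assms]) (use e in auto)
      have "pick S (card {a\<in>S. a<e}) = e" by (rule pick_card_in_set[OF e])
      then show "e \<in> pick S ` {..<card S}" using lt by (intro image_eqI[where x="card {a\<in>S. a<e}"]) auto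
    qed
  qed
qed

lemma abs_mult_lt_zero: fixes c t :: int assumes "\<bar>c * t\<bar> < \<bar>t\<bar>" shows "c = 0"
proof (rule ccontr)
  assume "c \<noteq> 0" then have "\<bar>c\<bar> \<ge> 1" by auto
  then have "\<bar>c\<bar> * \<bar>t\<bar> \<ge> 1 * \<bar>t\<bar>" by (intro mult_right_mono) auto
  then show False using assms by (simp add: abs_mult)
qed



lemma sum_upd_mult:
  fixes f g :: "nat \<Rightarrow> int"
  assumes "finite A" "k \<in> A"
  shows "(\<Sum>e\<in>A. (f(k := f k + q)) e * g e) = (\<Sum>e\<in>A. f e * g e) + q * g k"
proof -
  have "(\<Sum>e\<in>A. (f(k := f k + q)) e * g e) = (\<Sum>e\<in>A. f e * g e + (if e = k then q * g k else 0))"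
    by (rule sum.cong) (auto simp: algebra_simps)
  also have "\<dots> = (\<Sum>e\<in>A. f e * g e) + q * g k"
    using assms by (simp add: sum.distrib)
  finally show ?thesis .
qed

lemma addcol_span_sub:
  fixes Z :: "int mat"
  assumes Z: "Z \<in> carrier_mat m n" and kl: "k < n" "l < n" "k \<noteq> l"
  shows "int_col_span (addcol a k l Z) {0..<n} \<subseteq> int_col_span Z {0..<n}"
proof
  fix v assume "v \<in> int_col_span (addcol a k l Z) {0..<n}"
  then obtain c where v: "v = vec m (\<lambda>i. \<Sum>e\<in>{0..<n}. c e * addcol a k l Z $$ (i, e))"
    using Z unfolding int_col_span_def by auto
  define c' where "c' = c(l := c l + a * c k)"
  have "v = vec m (\<lambda>i. \<Sum>e\<in>{0..<n}. c' e * Z $$ (i, e))"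
  proof (rule eq_vecI)
    fix i assume "i < dim_vec (vec m (\<lambda>i. \<Sum>e\<in>{0..<n}. c' e * Z $$ (i, e)))"
    then have i: "i < m" by simp
    have "(\<Sum>e\<in>{0..<n}. c e * addcol a k l Z $$ (i, e))
        = (\<Sum>e\<in>{0..<n}. c e * Z $$ (i, e) + (if e = k then c k * (a * Z $$ (i,l)) else 0))"
      by (rule sum.cong) (use Z i in \<open>auto simp: algebra_simps\<close>)
    also have "\<dots> = (\<Sum>e\<in>{0..<n}. c e * Z $$ (i, e)) + c k * (a * Z $$ (i,l))"
      using kl by (simp add: sum.distrib)
    also have "\<dots> = (\<Sum>e\<in>{0..<n}. c' e * Z $$ (i, e))"
      unfolding c'_def by (subst sum_upd_mult) (use kl in \<open>auto simp: algebra_simps\<close>)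
    finally show "v $ i = vec m (\<lambda>i. \<Sum>e\<in>{0..<n}. c' e * Z $$ (i, e)) $ i"
      using v i by simp
  qed (simp add: v)
  then show "v \<in> int_col_span Z {0..<n}" using Z unfolding int_col_span_def by auto
qed

lemma addcol_span:
  fixes Z :: "int mat"
  assumes Z: "Z \<in> carrier_mat m n" and kl: "k < n" "l < n" "k \<noteq> l"
  shows "int_col_span (addcol a k l Z) {0..<n} = int_col_span Z {0..<n}"
proof
  show "int_col_span (addcol a k l Z) {0..<n} \<subseteq> int_col_span Z {0..<n}"
    by (rule addcol_span_sub[OF Z kl])
  have Z1: "addcol a k l Z \<in> carrier_mat m n" using Z by auto
  have "addcol (-a) k l (addcol a k l Z) = Z"
    by (rule eq_matI) (use Z kl in auto)
  then show "int_col_span Z {0..<n} \<subseteq> int_col_span (addcol a k l Z) {0..<n}"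
    using addcol_span_sub[OF Z1 kl, of "-a"] by simp
qed

definition lowtri_upto :: "nat \<Rightarrow> int mat \<Rightarrow> bool" where
  "lowtri_upto i Z \<longleftrightarrow> (\<forall>r<i. \<forall>j<dim_col Z. r < j \<longrightarrow> Z $$ (r,j) = 0)"

lemma addcol_keeps:
  fixes Z :: "int mat"
  assumes Z: "Z \<in> carrier_mat n n" and inv: "lowtri_upto i Z"
    and kl: "i \<le> k" "i \<le> l" "k < n" "l < n"
  shows "lowtri_upto i (addcol a k l Z)"
  unfolding lowtri_upto_def
proof (intro allI impI)
  fix r j assume r: "r < i" and j: "j < dim_col (addcol a k l Z)" and rj: "r < j"
  have "Z $$ (r, l) = 0" "Z $$ (r, j) = 0" using inv r j rj kl Z unfolding lowtri_upto_def by auto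
  then show "addcol a k l Z $$ (r, j) = 0" using Z r j kl by auto
qed

lemma sum_lt_change:
  fixes f g :: "nat \<Rightarrow> nat"
  assumes "finite A" "j \<in> A" "\<And>x. x \<in> A \<Longrightarrow> x \<noteq> j \<Longrightarrow> g x = f x" "g j < f j"
  shows "sum g A < sum f A"
proof -
  have "sum g A = g j + sum g (A - {j})" using assms by (simp add: sum.remove)
  also have "sum g (A - {j}) = sum f (A - {j})" using assms by (intro sum.cong) auto
  also have "g j + \<dots> < f j + sum f (A - {j})" using assms by simp
  also have "\<dots> = sum f A" using assms by (simp add: sum.remove)
  finally show ?thesis .
qed

lemma row_step:
  fixes Z :: "int mat"
  assumes Z: "Z \<in> carrier_mat n n" and i: "i < n" and inv: "lowtri_upto i Z"
  shows "\<exists>Z'. Z' \<in> carrier_mat n n \<and> int_col_span Z' {0..<n} = int_col_span Z {0..<n}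
     \<and> det Z' = det Z \<and> lowtri_upto (Suc i) Z'"
  using Z inv
proof (induction "\<Sum>j\<in>{i..<n}. nat \<bar>Z $$ (i,j)\<bar>" arbitrary: Z rule: less_induct)
  case less
  note Z = less.prems(1) and inv = less.prems(2)
  show ?case
  proof (cases "\<exists>j0 j1. i \<le> j0 \<and> j0 < n \<and> i \<le> j1 \<and> j1 < n \<and> j0 \<noteq> j1 \<and> Z $$ (i,j0) \<noteq> 0
      \<and> Z $$ (i,j1) \<noteq> 0 \<and> \<bar>Z $$ (i,j0)\<bar> \<le> \<bar>Z $$ (i,j1)\<bar>")
    case True
    then obtain j0 j1 where j: "i \<le> j0" "j0 < n" "i \<le> j1" "j1 < n" "j0 \<noteq> j1" "Z $$ (i,j0) \<noteq> 0"
      "Z $$ (i,j1) \<noteq> 0" "\<bar>Z $$ (i,j0)\<bar> \<le> \<bar>Z $$ (i,j1)\<bar>" by blast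
    define y where "y = Z $$ (i,j0)"
    define x where "x = Z $$ (i,j1)"
    define Z1 where "Z1 = addcol (- (x div y)) j1 j0 Z"
    have Z1c: "Z1 \<in> carrier_mat n n" unfolding Z1_def using Z by auto
    have Z1ij1: "Z1 $$ (i,j1) = x mod y"
      unfolding Z1_def using Z i j by (simp add: x_def y_def minus_mod_eq_mult_div[symmetric] algebra_simps)
    have "\<bar>x mod y\<bar> < \<bar>y\<bar>" using j(6) unfolding y_def by (rule abs_mod_less)
    then have lt1: "nat \<bar>Z1 $$ (i,j1)\<bar> < nat \<bar>Z $$ (i,j1)\<bar>"
      using Z1ij1 j(8) unfolding x_def y_def by simp
    have "(\<Sum>j\<in>{i..<n}. nat \<bar>Z1 $$ (i,j)\<bar>) < (\<Sum>j\<in>{i..<n}. nat \<bar>Z $$ (i,j)\<bar>)"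
    proof (rule sum_lt_change[where j = j1])
      show "j1 \<in> {i..<n}" using j by auto
      fix j assume "j \<in> {i..<n}" "j \<noteq> j1"
      then show "nat \<bar>Z1 $$ (i,j)\<bar> = nat \<bar>Z $$ (i,j)\<bar>" unfolding Z1_def using Z i by auto
    qed (use lt1 in simp_all)
    moreover have "lowtri_upto i Z1" unfolding Z1_def by (rule addcol_keeps[OF Z inv]) (use j in auto)
    ultimately obtain Z' where Z': "Z' \<in> carrier_mat n n" "int_col_span Z' {0..<n} = int_col_span Z1 {0..<n}"
      "det Z' = det Z1" "lowtri_upto (Suc i) Z'" using less.hyps[OF _ Z1c] by blast
    have "int_col_span Z1 {0..<n} = int_col_span Z {0..<n}" unfolding Z1_def
      by (rule addcol_span[OF Z]) (use j in auto)
    moreover have "det Z1 = det Z" unfolding Z1_def by (rule det_addcol) (use j Z in auto)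
    ultimately show ?thesis using Z' by auto
  next
    case False
    have zero: "Z $$ (i,j0) = 0 \<or> Z $$ (i,j1) = 0"
      if "i \<le> j0" "j0 < n" "i \<le> j1" "j1 < n" "j0 \<noteq> j1" for j0 j1
    proof (cases "\<bar>Z $$ (i,j0)\<bar> \<le> \<bar>Z $$ (i,j1)\<bar>")
      case True then show ?thesis using False that by blast
    next
      case nle: False then have "\<bar>Z $$ (i,j1)\<bar> \<le> \<bar>Z $$ (i,j0)\<bar>" by simp
      then show ?thesis using False that by blast
    qed
    show ?thesis
    proof (cases "\<forall>j. i < j \<and> j < n \<longrightarrow> Z $$ (i,j) = 0")
      case True
      have "lowtri_upto (Suc i) Z" using inv True Z unfolding lowtri_upto_def
        by (auto simp: less_Suc_eq)
      then show ?thesis using Z by blast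
    next
      case False
      then obtain j0 where j0: "i < j0" "j0 < n" "Z $$ (i,j0) \<noteq> 0" by blast
      have oth: "Z $$ (i,j) = 0" if "i \<le> j" "j < n" "j \<noteq> j0" for j
        using zero[of j0 j] that j0 by auto
      define Z1 where "Z1 = addcol 1 i j0 Z"
      define Z2 where "Z2 = addcol (-1) j0 i Z1"
      have Z1c: "Z1 \<in> carrier_mat n n" unfolding Z1_def using Z by auto
      have Z2c: "Z2 \<in> carrier_mat n n" unfolding Z2_def using Z1c by auto
      have inv1: "lowtri_upto i Z1" unfolding Z1_def by (rule addcol_keeps[OF Z inv]) (use j0 in auto)
      have inv2: "lowtri_upto i Z2" unfolding Z2_def by (rule addcol_keeps[OF Z1c inv1]) (use j0 i in auto)
      have rowi: "Z2 $$ (i,j) = 0" if "i < j" "j < n" for j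
      proof (cases "j = j0")
        case True
        have "Z2 $$ (i,j0) = - Z1 $$ (i,i) + Z1 $$ (i,j0)" unfolding Z2_def using Z1c i j0 by simp
        also have "Z1 $$ (i,i) = Z $$ (i,j0) + Z $$ (i,i)" unfolding Z1_def using Z i j0 by simp
        also have "Z1 $$ (i,j0) = Z $$ (i,j0)" unfolding Z1_def using Z i j0 by simp
        finally show ?thesis using True oth[of i] j0 i by simp
      next
        case False
        have "Z2 $$ (i,j) = Z1 $$ (i,j)" unfolding Z2_def using Z1c i that False by simp
        also have "\<dots> = Z $$ (i,j)" unfolding Z1_def using Z i that by simp
        finally show ?thesis using oth[of j] that False by simp
      qed
      have "lowtri_upto (Suc i) Z2" using inv2 rowi Z2c unfolding lowtri_upto_def
        by (auto simp: less_Suc_eq)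
      moreover have "int_col_span Z2 {0..<n} = int_col_span Z {0..<n}"
      proof -
        have "int_col_span Z2 {0..<n} = int_col_span Z1 {0..<n}" unfolding Z2_def
          by (rule addcol_span[OF Z1c]) (use j0 i in auto)
        also have "\<dots> = int_col_span Z {0..<n}" unfolding Z1_def
          by (rule addcol_span[OF Z]) (use j0 i in auto)
        finally show ?thesis .
      qed
      moreover have "det Z2 = det Z"
      proof -
        have "det Z2 = det Z1" unfolding Z2_def by (rule det_addcol[OF _ _ Z1c]) (use j0 i in auto)
        also have "\<dots> = det Z" unfolding Z1_def by (rule det_addcol[OF _ _ Z]) (use j0 i in auto)
        finally show ?thesis .
      qed
      ultimately show ?thesis using Z2c by blast
    qed
  qed
qed

lemma triangularize:
  fixes Z :: "int mat"
  assumes Z: "Z \<in> carrier_mat n n"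
  shows "\<exists>T. T \<in> carrier_mat n n \<and> int_col_span T {0..<n} = int_col_span Z {0..<n}
     \<and> det T = det Z \<and> lowtri_upto n T"
proof -
  have "\<exists>T. T \<in> carrier_mat n n \<and> int_col_span T {0..<n} = int_col_span Z {0..<n}
     \<and> det T = det Z \<and> lowtri_upto i T" if "i \<le> n" for i
    using that
  proof (induction i)
    case 0
    then show ?case using Z by (intro exI[of _ Z]) (auto simp: lowtri_upto_def)
  next
    case (Suc i)
    then obtain T where T: "T \<in> carrier_mat n n" "int_col_span T {0..<n} = int_col_span Z {0..<n}"
      "det T = det Z" "lowtri_upto i T" by auto
    from row_step[OF T(1) _ T(4)] Suc.prems obtain T' where
      "T' \<in> carrier_mat n n" "int_col_span T' {0..<n} = int_col_span T {0..<n}"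
      "det T' = det T" "lowtri_upto (Suc i) T'" by auto
    then show ?case using T by auto
  qed
  then show ?thesis by blast
qed



lemma lowtri_index:
  fixes T :: "int mat"
  assumes T: "T \<in> carrier_mat n n" and lt: "lowtri_upto n T" and nz: "\<And>i. i < n \<Longrightarrow> T $$ (i,i) \<noteq> 0"
  shows "card {{v + w | w. w \<in> int_col_span T {0..<n}} | v. v \<in> carrier_vec n}
       = (\<Prod>i<n. nat \<bar>T $$ (i,i)\<bar>)"
proof -
  let ?L = "int_col_span T {0..<n}"
  let ?R = "{v :: int vec. v \<in> carrier_vec n \<and> (\<forall>i<n. 0 \<le> v $ i \<and> v $ i < \<bar>T $$ (i,i)\<bar>)}"
  have Tz: "T $$ (r,j) = 0" if "r < j" "j < n" for r j
    using lt that T unfolding lowtri_upto_def by auto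
  have Lform: "?L = {vec n (\<lambda>i. \<Sum>e\<in>{0..<n}. c e * T $$ (i, e)) | c. True}"
    using T unfolding int_col_span_def by auto
  have "card {{v + w | w. w \<in> ?L} | v. v \<in> carrier_vec n} = card ?R"
  proof (rule coset_count[where n = n])
    have Lmem: "vec n (\<lambda>i. \<Sum>e\<in>{0..<n}. c e * T $$ (i, e)) \<in> ?L" for c
      unfolding Lform by blast
    show "?L \<subseteq> carrier_vec n" unfolding Lform by auto
    show "carrier_vec n \<subseteq> carrier_vec n" by simp
    show "0\<^sub>v n \<in> ?L" unfolding Lform by (auto intro!: exI[of _ "\<lambda>_. 0"] eq_vecI)
    show "x + y \<in> ?L" if xL: "x \<in> ?L" and yL: "y \<in> ?L" for x y
    proof -
      obtain c1 where c1: "x = vec n (\<lambda>i. \<Sum>e\<in>{0..<n}. c1 e * T $$ (i, e))" using xL Lform by auto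
      obtain c2 where c2: "y = vec n (\<lambda>i. \<Sum>e\<in>{0..<n}. c2 e * T $$ (i, e))" using yL Lform by auto
      have "x + y = vec n (\<lambda>i. \<Sum>e\<in>{0..<n}. (c1 e + c2 e) * T $$ (i, e))"
        unfolding c1 c2 by (rule eq_vecI) (auto simp: sum.distrib algebra_simps)
      then show ?thesis using Lmem[of "\<lambda>e. c1 e + c2 e"] by simp
    qed
    show "- x \<in> ?L" if xL: "x \<in> ?L" for x
    proof -
      obtain c1 where c1: "x = vec n (\<lambda>i. \<Sum>e\<in>{0..<n}. c1 e * T $$ (i, e))" using xL Lform by auto
      have "- x = vec n (\<lambda>i. \<Sum>e\<in>{0..<n}. (- c1 e) * T $$ (i, e))"
        unfolding c1 by (rule eq_vecI) (auto simp: sum_negf)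
      then show ?thesis using Lmem[of "\<lambda>e. - c1 e"] by simp
    qed
    show "?R \<subseteq> carrier_vec n" by auto
    show "\<exists>r\<in>?R. p - r \<in> ?L" if p: "p \<in> carrier_vec n" for p
    proof -
      have "\<exists>c. \<forall>i<k. 0 \<le> p $ i - (\<Sum>e\<in>{0..<n}. c e * T $$ (i, e))
            \<and> p $ i - (\<Sum>e\<in>{0..<n}. c e * T $$ (i, e)) < \<bar>T $$ (i,i)\<bar>" if "k \<le> n" for k
        using that
      proof (induction k)
        case 0 then show ?case by auto
      next
        case (Suc k)
        then obtain c where c: "\<forall>i<k. 0 \<le> p $ i - (\<Sum>e\<in>{0..<n}. c e * T $$ (i, e))
            \<and> p $ i - (\<Sum>e\<in>{0..<n}. c e * T $$ (i, e)) < \<bar>T $$ (i,i)\<bar>" by auto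
        have k: "k < n" using Suc.prems by simp
        define t where "t = T $$ (k,k)"
        define w where "w = p $ k - (\<Sum>e\<in>{0..<n}. c e * T $$ (k, e))"
        define q where "q = (w div \<bar>t\<bar>) * sgn t"
        define c' where "c' = c(k := c k + q)"
        have sc: "(\<Sum>e\<in>{0..<n}. c' e * T $$ (i, e)) = (\<Sum>e\<in>{0..<n}. c e * T $$ (i, e)) + q * T $$ (i,k)" for i
          unfolding c'_def by (rule sum_upd_mult) (use k in auto)
        have tnz: "t \<noteq> 0" using nz[OF k] unfolding t_def .
        have "q * t = (w div \<bar>t\<bar>) * \<bar>t\<bar>" unfolding q_def by (simp add: abs_sgn algebra_simps)
        then have wk: "w - q * t = w mod \<bar>t\<bar>" by (simp add: minus_div_mult_eq_mod)
        have "\<forall>i<Suc k. 0 \<le> p $ i - (\<Sum>e\<in>{0..<n}. c' e * T $$ (i, e))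
            \<and> p $ i - (\<Sum>e\<in>{0..<n}. c' e * T $$ (i, e)) < \<bar>T $$ (i,i)\<bar>"
        proof (intro allI impI)
          fix i assume "i < Suc k"
          then consider "i < k" | "i = k" by linarith
          then show "0 \<le> p $ i - (\<Sum>e\<in>{0..<n}. c' e * T $$ (i, e))
            \<and> p $ i - (\<Sum>e\<in>{0..<n}. c' e * T $$ (i, e)) < \<bar>T $$ (i,i)\<bar>"
          proof cases
            case 1
            then have "T $$ (i,k) = 0" using Tz k by auto
            then show ?thesis using c 1 unfolding sc by simp
          next
            case 2
            have "p $ i - (\<Sum>e\<in>{0..<n}. c' e * T $$ (i, e)) = w - q * t"
              unfolding sc using 2 by (simp add: w_def t_def algebra_simps)
            then have "p $ i - (\<Sum>e\<in>{0..<n}. c' e * T $$ (i, e)) = w mod \<bar>t\<bar>"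
              using wk by simp
            moreover have "0 \<le> w mod \<bar>t\<bar>" "w mod \<bar>t\<bar> < \<bar>t\<bar>" using tnz by auto
            ultimately show ?thesis using 2 t_def by simp
          qed
        qed
        then show ?case by blast
      qed
      then obtain c where c: "\<forall>i<n. 0 \<le> p $ i - (\<Sum>e\<in>{0..<n}. c e * T $$ (i, e))
            \<and> p $ i - (\<Sum>e\<in>{0..<n}. c e * T $$ (i, e)) < \<bar>T $$ (i,i)\<bar>" by blast
      define r where "r = vec n (\<lambda>i. p $ i - (\<Sum>e\<in>{0..<n}. c e * T $$ (i, e)))"
      have "r \<in> ?R" unfolding r_def using c by auto
      moreover have "p - r = vec n (\<lambda>i. \<Sum>e\<in>{0..<n}. c e * T $$ (i, e))"
        unfolding r_def by (rule eq_vecI) (use p in auto)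
      then have "p - r \<in> ?L" unfolding Lform by blast
      ultimately show ?thesis by blast
    qed
    show "r = r'" if r: "r \<in> ?R" "r' \<in> ?R" "r - r' \<in> ?L" for r r'
    proof -
      obtain c where c: "r - r' = vec n (\<lambda>i. \<Sum>e\<in>{0..<n}. c e * T $$ (i, e))" using r(3) Lform by auto
      have ci: "r $ i - r' $ i = (\<Sum>e\<in>{0..<n}. c e * T $$ (i, e))" if "i < n" for i
      proof -
        have "(r - r') $ i = r $ i - r' $ i" using r that by auto
        then show ?thesis using c that by simp
      qed
      have c0: "c k = 0" if "k < n" for k
        using that
      proof (induction k rule: less_induct)
        case (less k)
        have "(\<Sum>e\<in>{0..<n}. c e * T $$ (k, e)) = c k * T $$ (k,k) + (\<Sum>e\<in>{0..<n} - {k}. c e * T $$ (k, e))"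
          using less.prems by (simp add: sum.remove)
        also have "(\<Sum>e\<in>{0..<n} - {k}. c e * T $$ (k, e)) = 0"
        proof (rule sum.neutral, intro ballI)
          fix e assume e: "e \<in> {0..<n} - {k}"
          show "c e * T $$ (k, e) = 0"
          proof (cases "e < k")
            case True then show ?thesis using less.IH less.prems by auto
          next
            case False then have "k < e" using e by auto
            then show ?thesis using Tz e by auto
          qed
        qed
        finally have "r $ k - r' $ k = c k * T $$ (k,k)" using ci[OF less.prems] by simp
        moreover have "\<bar>r $ k - r' $ k\<bar> < \<bar>T $$ (k,k)\<bar>"
        proof -
          have b1: "0 \<le> r $ k" "r $ k < \<bar>T $$ (k,k)\<bar>" using r less.prems by auto
          have b2: "0 \<le> r' $ k" "r' $ k < \<bar>T $$ (k,k)\<bar>" using r less.prems by auto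
          show ?thesis unfolding abs_less_iff using b1 b2 by linarith
        qed
        ultimately show ?case using abs_mult_lt_zero by metis
      qed
      show "r = r'"
      proof (rule eq_vecI)
        fix i assume "i < dim_vec r'"
        then have i: "i < n" using r by auto
        have "r $ i - r' $ i = 0" using ci[OF i] c0 by simp
        then show "r $ i = r' $ i" by simp
      qed (use r in auto)
    qed
  qed
  also have "card ?R = (\<Prod>i<n. nat \<bar>T $$ (i,i)\<bar>)" by (rule card_box)
  finally show ?thesis .
qed

theorem index_det:
  fixes Z :: "int mat"
  assumes Z: "Z \<in> carrier_mat n n" and d: "det Z \<noteq> 0"
  shows "card {{v + w | w. w \<in> int_col_span Z {0..<n}} | v. v \<in> carrier_vec n} = nat \<bar>det Z\<bar>"
proof -
  obtain T where T: "T \<in> carrier_mat n n" "int_col_span T {0..<n} = int_col_span Z {0..<n}"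
     "det T = det Z" "lowtri_upto n T" using triangularize[OF Z] by blast
  have dT: "det T = (\<Prod>i\<in>{0..<n}. T $$ (i,i))"
  proof -
    have "det T = prod_list (diag_mat T)"
      by (rule det_lower_triangular[OF _ T(1)]) (use T(4) T(1) in \<open>auto simp: lowtri_upto_def\<close>)
    then show ?thesis using T(1) by (simp add: prod_list_diag_prod)
  qed
  have nz: "T $$ (i,i) \<noteq> 0" if "i < n" for i
    using d dT T(3) that by (auto simp: prod_zero_iff)
  have "card {{v + w | w. w \<in> int_col_span Z {0..<n}} | v. v \<in> carrier_vec n}
      = (\<Prod>i<n. nat \<bar>T $$ (i,i)\<bar>)" using lowtri_index[OF T(1) T(4) nz] T(2) by simp
  also have "\<dots> = nat \<bar>det Z\<bar>"
  proof -
    have "int (\<Prod>i<n. nat \<bar>T $$ (i,i)\<bar>) = (\<Prod>i<n. \<bar>T $$ (i,i)\<bar>)" by simp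
    also have "\<dots> = \<bar>det T\<bar>" unfolding dT by (simp add: abs_prod atLeast0LessThan)
    finally have h: "int (\<Prod>i<n. nat \<bar>T $$ (i,i)\<bar>) = \<bar>det Z\<bar>" using T(3) by simp
    show ?thesis by (metis h nat_int)
  qed
  finally show ?thesis .
qed



lemma subm_props:
  fixes Y :: "'a mat"
  assumes Y: "Y \<in> carrier_mat d N" and S: "S \<subseteq> {0..<N}"
  shows "submatrix Y UNIV S \<in> carrier_mat d (card S)"
    and "\<And>i j. i < d \<Longrightarrow> j < card S \<Longrightarrow> submatrix Y UNIV S $$ (i,j) = Y $$ (i, pick S j)"
proof -
  have r: "{i. i < dim_row Y \<and> i \<in> UNIV} = {..<d}" using Y by auto
  have c: "{j. j < dim_col Y \<and> j \<in> S} = S" using Y S by auto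
  have dr: "dim_row (submatrix Y UNIV S) = d" unfolding dim_submatrix r by simp
  have dc: "dim_col (submatrix Y UNIV S) = card S" unfolding dim_submatrix c ..
  show "submatrix Y UNIV S \<in> carrier_mat d (card S)" using dr dc by (rule carrier_matI)
  fix i j assume "i < d" "j < card S"
  then show "submatrix Y UNIV S $$ (i,j) = Y $$ (i, pick S j)"
    using submatrix_index[of i Y UNIV j S] r c carrier_matD[OF Y] by (simp add: pick_UNIV)
qed

lemma subm_col:
  fixes Y :: "'a mat"
  assumes Y: "Y \<in> carrier_mat d N" and S: "S \<subseteq> {0..<N}" and j: "j < card S"
  shows "col (submatrix Y UNIV S) j = col Y (pick S j)"
proof -
  have fin: "finite S" using S finite_subset by blast
  have "pick S j \<in> S" using pick_in_set_le[OF j] .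
  then have pj: "pick S j < N" using S by auto
  show ?thesis
    by (rule eq_vecI) (use subm_props[OF Y S] j pj Y in auto)
qed

lemma bij_pick0: assumes "finite S" shows "bij_betw (pick S) {0..<card S} S"
  using bij_pick[OF assms] by (simp add: atLeast0LessThan)

lemma int_col_span_sub:
  fixes Y :: "int mat"
  assumes Y: "Y \<in> carrier_mat d N" and S: "S \<subseteq> {0..<N}"
  shows "int_col_span Y S = int_col_span (submatrix Y UNIV S) {0..<card S}"
proof -
  let ?Z = "submatrix Y UNIV S"
  note Z = subm_props(1)[OF Y S] and Zi = subm_props(2)[OF Y S]
  have fin: "finite S" using S finite_subset by blast
  have bij: "bij_betw (pick S) {0..<card S} S" by (rule bij_pick0[OF fin])
  have key: "(\<Sum>e\<in>S. c e * Y $$ (i,e)) = (\<Sum>j\<in>{0..<card S}. c (pick S j) * ?Z $$ (i,j))"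
    if "i < d" for c i
  proof -
    have "(\<Sum>e\<in>S. c e * Y $$ (i,e)) = (\<Sum>j\<in>{0..<card S}. c (pick S j) * Y $$ (i, pick S j))"
      using sum.reindex_bij_betw[OF bij, of "\<lambda>e. c e * Y $$ (i,e)"] by simp
    also have "\<dots> = (\<Sum>j\<in>{0..<card S}. c (pick S j) * ?Z $$ (i,j))"
      using Zi that by (intro sum.cong) auto
    finally show ?thesis .
  qed
  show ?thesis
  proof
    show "int_col_span Y S \<subseteq> int_col_span ?Z {0..<card S}"
    proof
      fix v assume "v \<in> int_col_span Y S"
      then obtain c where v: "v = vec d (\<lambda>i. \<Sum>e\<in>S. c e * Y $$ (i,e))"
        using Y unfolding int_col_span_def by auto
      have "v = vec d (\<lambda>i. \<Sum>j\<in>{0..<card S}. (c \<circ> pick S) j * ?Z $$ (i,j))"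
        unfolding v by (rule eq_vecI) (auto simp: key)
      then have "\<exists>c. v = vec (dim_row ?Z) (\<lambda>i. \<Sum>j\<in>{0..<card S}. c j * ?Z $$ (i,j))"
        using Z by (intro exI[of _ "c \<circ> pick S"]) simp
      then show "v \<in> int_col_span ?Z {0..<card S}" unfolding int_col_span_def by simp
    qed
    show "int_col_span ?Z {0..<card S} \<subseteq> int_col_span Y S"
    proof
      fix v assume "v \<in> int_col_span ?Z {0..<card S}"
      then obtain c where v: "v = vec d (\<lambda>i. \<Sum>j\<in>{0..<card S}. c j * ?Z $$ (i,j))"
        using Z unfolding int_col_span_def by auto
      define c' where "c' e = c (card {a\<in>S. a < e})" for e
      have cc: "c' (pick S j) = c j" if "j \<in> {0..<card S}" for j
        unfolding c'_def using card_pick_le[of j S] that by simp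
      have "v = vec d (\<lambda>i. \<Sum>e\<in>S. c' e * Y $$ (i,e))"
      proof (rule eq_vecI)
        fix i assume "i < dim_vec (vec d (\<lambda>i. \<Sum>e\<in>S. c' e * Y $$ (i,e)))"
        then have i: "i < d" by simp
        have "(\<Sum>e\<in>S. c' e * Y $$ (i,e)) = (\<Sum>j\<in>{0..<card S}. c j * ?Z $$ (i,j))"
          unfolding key[OF i] by (rule sum.cong) (auto simp: cc)
        then show "v $ i = vec d (\<lambda>i. \<Sum>e\<in>S. c' e * Y $$ (i,e)) $ i" using v i by simp
      qed (simp add: v)
      then have "\<exists>c. v = vec (dim_row Y) (\<lambda>i. \<Sum>e\<in>S. c e * Y $$ (i,e))"
        using Y by (intro exI[of _ c']) simp
      then show "v \<in> int_col_span Y S" unfolding int_col_span_def by simp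
    qed
  qed
qed

lemma real_col_span_sub:
  fixes Y :: "int mat"
  assumes Y: "Y \<in> carrier_mat d N" and S: "S \<subseteq> {0..<N}"
  shows "real_col_span Y S = real_col_span (submatrix Y UNIV S) {0..<card S}"
proof -
  let ?Z = "submatrix Y UNIV S"
  note Z = subm_props(1)[OF Y S]
  have fin: "finite S" using S finite_subset by blast
  have bij: "bij_betw (pick S) {0..<card S} S" by (rule bij_pick0[OF fin])
  have "(\<lambda>e. map_vec real_of_int (col Y e)) ` S
      = (\<lambda>e. map_vec real_of_int (col Y e)) ` (pick S ` {0..<card S})"
    using bij by (simp add: bij_betw_def)
  also have "\<dots> = (\<lambda>j. map_vec real_of_int (col ?Z j)) ` {0..<card S}"
    unfolding image_image by (rule image_cong) (use subm_col[OF Y S] in auto)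
  finally have im: "(\<lambda>e. map_vec real_of_int (col Y e)) ` S
      = (\<lambda>j. map_vec real_of_int (col ?Z j)) ` {0..<card S}" .
  show ?thesis unfolding real_col_span_def im using Y Z by simp
qed

lemma am_sub:
  fixes Y :: "int mat"
  assumes Y: "Y \<in> carrier_mat d N" and S: "S \<subseteq> {0..<N}"
  shows "am_mult Y S = am_mult (submatrix Y UNIV S) {0..<card S}"
    and "am_rk Y S = am_rk (submatrix Y UNIV S) {0..<card S}"
proof -
  note Z = subm_props(1)[OF Y S]
  have dr: "dim_row (submatrix Y UNIV S) = dim_row Y" using Y Z by simp
  show "am_mult Y S = am_mult (submatrix Y UNIV S) {0..<card S}"
    unfolding am_mult_def int_points_of_span_def
      int_col_span_sub[OF Y S, symmetric] real_col_span_sub[OF Y S, symmetric] dr ..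
  show "am_rk Y S = am_rk (submatrix Y UNIV S) {0..<card S}"
    unfolding am_rk_def real_col_span_sub[OF Y S, symmetric] dr ..
qed

lemma (in vec_space) span_cols_full:
  assumes A: "A \<in> carrier_mat n n" and d: "det A \<noteq> 0"
  shows "span (set (cols A)) = carrier_vec n"
proof -
  let ?B = "transpose_mat A"
  have B: "?B \<in> carrier_mat n n" using A by auto
  have dB: "det ?B \<noteq> 0" using d det_transpose[OF A] by simp
  have dist: "distinct (rows ?B)"
  proof (rule ccontr)
    assume "\<not> distinct (rows ?B)"
    then obtain i j where ij: "i \<noteq> j" "i < length (rows ?B)" "j < length (rows ?B)" "rows ?B ! i = rows ?B ! j"
      using distinct_conv_nth by metis
    then have "row ?B i = row ?B j" "i < n" "j < n" using B by auto
    then have "det ?B = 0" using det_identical_rows[OF B ij(1)] by auto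
    with dB show False by simp
  qed
  have li: "lin_indpt (set (rows ?B))" by (rule det_not_0_imp_lin_indpt_rows[OF B dB])
  have dist': "distinct (cols A)" using dist by simp
  have li': "lin_indpt (set (cols A))" using li by simp
  have "basis (set (cols A))"
  proof (rule dim_li_is_basis)
    show "set (cols A) \<subseteq> carrier_vec n" using cols_dim[of A] A by auto
    show "dim \<le> card (set (cols A))" using dist' A by (simp add: distinct_card dim_is_n)
  qed (use li' in auto)
  then show ?thesis unfolding basis_def by auto
qed

lemma set_cols_map:
  fixes Z :: "int mat"
  assumes Z: "Z \<in> carrier_mat n n"
  shows "set (cols (map_mat real_of_int Z)) = (\<lambda>e. map_vec real_of_int (col Z e)) ` {0..<n}"
proof -
  have "set (cols (map_mat real_of_int Z)) = (\<lambda>e. col (map_mat real_of_int Z) e) ` {0..<n}"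
    using Z unfolding cols_def by auto
  also have "\<dots> = (\<lambda>e. map_vec real_of_int (col Z e)) ` {0..<n}"
    by (rule image_cong) (use Z in auto)
  finally show ?thesis .
qed

lemma square_rank:
  fixes Z :: "int mat"
  assumes Z: "Z \<in> carrier_mat n n"
  shows "am_rk Z {0..<n} = n \<longleftrightarrow> det Z \<noteq> 0"
proof -
  interpret vs: vec_space "TYPE(real)" n .
  have Zr: "map_mat real_of_int Z \<in> carrier_mat n n" using Z by auto
  have "am_rk Z {0..<n} = vs.rank (map_mat real_of_int Z)"
    unfolding am_rk_def vs.rank_def real_col_span_def set_cols_map[OF Z] using Z by simp
  moreover have "det (map_mat real_of_int Z) = real_of_int (det Z)" by simp
  ultimately show ?thesis using vs.det_rank_iff[OF Zr] by simp
qed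

lemma square_span_full:
  fixes Z :: "int mat"
  assumes Z: "Z \<in> carrier_mat n n" and d: "det Z \<noteq> 0"
  shows "int_points_of_span Z {0..<n} = carrier_vec n"
proof -
  interpret vs: vec_space "TYPE(real)" n .
  have Zr: "map_mat real_of_int Z \<in> carrier_mat n n" using Z by auto
  have dr: "det (map_mat real_of_int Z) \<noteq> 0" using d by simp
  have "real_col_span Z {0..<n} = carrier_vec n"
    using vs.span_cols_full[OF Zr dr] unfolding real_col_span_def set_cols_map[OF Z] using Z by simp
  then show ?thesis unfolding int_points_of_span_def using Z by auto
qed



lemma pick_union_low:
  assumes fA: "finite A" and lt: "\<And>a b. a \<in> A \<Longrightarrow> b \<in> B \<Longrightarrow> a < b" and j: "j < card A"
  shows "pick (A \<union> B) j = pick A j"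
proof -
  let ?x = "pick A j"
  have xA: "?x \<in> A" using pick_in_set_le[OF j] .
  have "{a\<in>A \<union> B. a < ?x} = {a\<in>A. a < ?x}" using lt xA by fastforce
  then have "card {a\<in>A \<union> B. a < ?x} = j" using card_pick_le[OF j] by simp
  then show ?thesis using pick_card_in_set[of ?x "A \<union> B"] xA by simp
qed

lemma pick_union_high:
  assumes fA: "finite A" and fB: "finite B" and lt: "\<And>a b. a \<in> A \<Longrightarrow> b \<in> B \<Longrightarrow> a < b"
    and q: "q < card B"
  shows "pick (A \<union> B) (card A + q) = pick B q"
proof -
  let ?x = "pick B q"
  have xB: "?x \<in> B" using pick_in_set_le[OF q] .
  have eq: "{a\<in>A \<union> B. a < ?x} = A \<union> {a\<in>B. a < ?x}" using lt xB by fastforce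
  have disj: "A \<inter> {a\<in>B. a < ?x} = {}" using lt by fastforce
  have "card {a\<in>A \<union> B. a < ?x} = card A + card {a\<in>B. a < ?x}"
    unfolding eq by (rule card_Un_disjoint) (use fA fB disj in auto)
  also have "card {a\<in>B. a < ?x} = q" using card_pick_le[OF q] .
  finally show ?thesis using pick_card_in_set[of ?x "A \<union> B"] xB by simp
qed

lemma pick_inj_eq:
  assumes "finite S" "i < card S" "j < card S"
  shows "pick S i = pick S j \<longleftrightarrow> i = j"
  using bij_betw_imp_inj_on[OF bij_pick[OF assms(1)]] assms(2,3) by (auto dest: inj_onD)



lemma diag_mult:
  fixes X :: "int mat"
  assumes X: "X \<in> carrier_mat d N" and dN: "d \<le> N"
    and diag: "\<And>i j. i < d \<Longrightarrow> j < d \<Longrightarrow> i \<noteq> j \<Longrightarrow> X $$ (i,j) = 0"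
    and pos: "\<And>i. i < d \<Longrightarrow> X $$ (i,i) > 0"
    and Sc: "Sc \<subseteq> {0..<d}"
  shows "am_mult X Sc = (\<Prod>k\<in>Sc. nat (X $$ (k,k)))"
proof -
  interpret vs: vec_space "TYPE(real)" d .
  define b where "b k = X $$ (k,k)" for k
  have bpos: "b k > 0" if "k \<in> Sc" for k using pos[of k] that Sc unfolding b_def by auto
  have Xe: "X $$ (i,e) = (if i = e then b e else 0)" if "i < d" "e < d" for i e
    using diag[OF that] unfolding b_def by auto
  have finSc: "finite Sc" using Sc finite_subset by blast
  define g where "g = (\<lambda>e. map_vec real_of_int (col X e))"
  have gi: "g e $ i = (if i = e then real_of_int (b e) else 0)" if "i < d" "e \<in> Sc" for i e
  proof -
    have e: "e < d" "e < N" using that Sc dN by auto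
    have "g e $ i = real_of_int (X $$ (i,e))" unfolding g_def using X that e by simp
    then show ?thesis using Xe[of i e] that e by simp
  qed
  have gc: "g e \<in> carrier_vec d" for e
  proof (rule carrier_vecI)
    show "dim_vec (g e) = d" unfolding g_def using X by simp
  qed
  let ?G = "g ` Sc"
  have Gc: "?G \<subseteq> carrier_vec d" using gc by auto
  have finG: "finite ?G" using finSc by simp
  have span: "real_col_span X Sc = vs.span ?G" unfolding real_col_span_def g_def using X by simp
  let ?P = "{v \<in> carrier_vec d. \<forall>i<d. i \<notin> Sc \<longrightarrow> v $ i = 0}"
  have Peq: "int_points_of_span X Sc = ?P"
  proof (intro equalityI subsetI)
    fix v assume "v \<in> int_points_of_span X Sc"
    then have v: "v \<in> carrier_vec d" "map_vec real_of_int v \<in> vs.span ?G"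
      unfolding int_points_of_span_def span using X by auto
    obtain a A where aA: "map_vec real_of_int v = vs.lincomb a A" "finite A" "A \<subseteq> ?G"
      using vs.in_spanE[OF v(2)] by blast
    have "v $ i = 0" if i: "i < d" "i \<notin> Sc" for i
    proof -
      have "real_of_int (v $ i) = vs.lincomb a A $ i"
        using arg_cong[OF aA(1), of "\<lambda>x. x $ i"] i v(1) by simp
      also have "\<dots> = (\<Sum>x\<in>A. a x * x $ i)"
        by (rule vs.lincomb_index[OF i(1)]) (use aA Gc in auto)
      also have "\<dots> = 0"
      proof (rule sum.neutral, intro ballI)
        fix x assume "x \<in> A"
        then obtain e where e: "e \<in> Sc" "x = g e" using aA by auto
        then have "x $ i = 0" using gi[OF i(1) e(1)] i by auto
        then show "a x * x $ i = 0" by simp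
      qed
      finally show "v $ i = 0" by simp
    qed
    then show "v \<in> ?P" using v by auto
  next
    fix v :: "int vec" assume "v \<in> ?P"
    then have v: "v \<in> carrier_vec d" "\<And>i. i < d \<Longrightarrow> i \<notin> Sc \<Longrightarrow> v $ i = 0" by auto
    define a where "a x = (\<Sum>k\<in>Sc. x $ k * real_of_int (v $ k) / (real_of_int (b k))^2)" for x
    have ag: "a (g e) = real_of_int (v $ e) / real_of_int (b e)" if e: "e \<in> Sc" for e
    proof -
      have "a (g e) = (\<Sum>k\<in>Sc. if k = e then real_of_int (b e) * real_of_int (v $ e) / (real_of_int (b e))^2 else 0)"
        unfolding a_def by (rule sum.cong) (use gi Sc e in auto)
      also have "\<dots> = real_of_int (b e) * real_of_int (v $ e) / (real_of_int (b e))^2"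
        using e finSc by simp
      also have "\<dots> = real_of_int (v $ e) / real_of_int (b e)"
        using bpos[OF e] by (simp add: power2_eq_square)
      finally show ?thesis .
    qed
    have injg: "inj_on g Sc"
    proof (rule inj_onI)
      fix e e' assume ee: "e \<in> Sc" "e' \<in> Sc" "g e = g e'"
      have ed: "e < d" using ee Sc by auto
      show "e = e'"
      proof (rule ccontr)
        assume "e \<noteq> e'"
        then have "g e' $ e = 0" using gi[OF ed ee(2)] by simp
        moreover have "g e $ e = real_of_int (b e)" using gi[OF ed ee(1)] by simp
        ultimately show False using ee(3) bpos[OF ee(1)] by simp
      qed
    qed
    have "map_vec real_of_int v = vs.lincomb a ?G"
    proof (rule eq_vecI)
      show "dim_vec (map_vec real_of_int v) = dim_vec (vs.lincomb a ?G)"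
        using vs.lincomb_dim[OF finG Gc] v(1) by simp
      fix i assume "i < dim_vec (vs.lincomb a ?G)"
      then have i: "i < d" using vs.lincomb_dim[OF finG Gc] by simp
      have "vs.lincomb a ?G $ i = (\<Sum>x\<in>?G. a x * x $ i)" by (rule vs.lincomb_index[OF i Gc])
      also have "\<dots> = (\<Sum>e\<in>Sc. a (g e) * g e $ i)" using sum.reindex[OF injg] by simp
      also have "\<dots> = (\<Sum>e\<in>Sc. if e = i then real_of_int (v $ i) else 0)"
      proof (rule sum.cong)
        fix e assume e: "e \<in> Sc"
        show "a (g e) * g e $ i = (if e = i then real_of_int (v $ i) else 0)"
          using ag[OF e] gi[OF i e] bpos[OF e] by auto
      qed simp
      also have "\<dots> = real_of_int (v $ i)" using finSc v(2)[OF i] by auto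
      finally show "map_vec real_of_int v $ i = vs.lincomb a ?G $ i" using i v(1) by simp
    qed
    then have "map_vec real_of_int v \<in> vs.span ?G" by (intro vs.in_spanI[where a = a and A = "?G"]) (use finG in auto)
    then show "v \<in> int_points_of_span X Sc" unfolding int_points_of_span_def span using X v by auto
  qed
  have sumX: "(\<Sum>e\<in>Sc. c e * X $$ (i,e)) = (if i \<in> Sc then c i * b i else 0)" if i: "i < d" for c i
  proof -
    have "(\<Sum>e\<in>Sc. c e * X $$ (i,e)) = (\<Sum>e\<in>Sc. if i = e then c e * b e else 0)"
      by (rule sum.cong) (use Xe i Sc in auto)
    also have "\<dots> = (if i \<in> Sc then c i * b i else 0)" using finSc by simp
    finally show ?thesis .
  qed
  let ?L = "int_col_span X Sc"
  have Lform: "?L = {vec d (\<lambda>i. if i \<in> Sc then c i * b i else 0) | c. True}"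
  proof -
    have "vec d (\<lambda>i. \<Sum>e\<in>Sc. c e * X $$ (i,e)) = vec d (\<lambda>i. if i \<in> Sc then c i * b i else 0)" for c
      by (rule eq_vecI) (auto simp: sumX)
    then show ?thesis unfolding int_col_span_def using X by auto
  qed
  have Lmem: "vec d (\<lambda>i. if i \<in> Sc then c i * b i else 0) \<in> ?L" for c unfolding Lform by blast
  let ?R = "{v :: int vec. v \<in> carrier_vec d \<and> (\<forall>i<d. 0 \<le> v $ i \<and> v $ i < (if i \<in> Sc then b i else 1))}"
  have "am_mult X Sc = card {{v + w | w. w \<in> ?L} | v. v \<in> ?P}"
    unfolding am_mult_def Peq ..
  also have "\<dots> = card ?R"
  proof (rule coset_count[where n = d])
    show "?L \<subseteq> carrier_vec d" unfolding Lform by auto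
    show "?P \<subseteq> carrier_vec d" by auto
    show "0\<^sub>v d \<in> ?L"
    proof -
      have z: "0\<^sub>v d = vec d (\<lambda>i. if i \<in> Sc then (\<lambda>_. 0) i * b i else 0)" by (rule eq_vecI) auto
      show ?thesis by (subst z) (rule Lmem)
    qed
    show "x + y \<in> ?L" if xL: "x \<in> ?L" and yL: "y \<in> ?L" for x y
    proof -
      obtain c1 where c1: "x = vec d (\<lambda>i. if i \<in> Sc then c1 i * b i else 0)" using xL Lform by auto
      obtain c2 where c2: "y = vec d (\<lambda>i. if i \<in> Sc then c2 i * b i else 0)" using yL Lform by auto
      have "x + y = vec d (\<lambda>i. if i \<in> Sc then (c1 i + c2 i) * b i else 0)"
        unfolding c1 c2 by (rule eq_vecI) (auto simp: algebra_simps)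
      then show ?thesis using Lmem[of "\<lambda>i. c1 i + c2 i"] by simp
    qed
    show "- x \<in> ?L" if xL: "x \<in> ?L" for x
    proof -
      obtain c1 where c1: "x = vec d (\<lambda>i. if i \<in> Sc then c1 i * b i else 0)" using xL Lform by auto
      have "- x = vec d (\<lambda>i. if i \<in> Sc then (- c1 i) * b i else 0)"
        unfolding c1 by (rule eq_vecI) auto
      then show ?thesis using Lmem[of "\<lambda>i. - c1 i"] by simp
    qed
    show "?R \<subseteq> ?P"
    proof
      fix v assume "v \<in> ?R"
      then have "v \<in> carrier_vec d" "\<And>i. i < d \<Longrightarrow> 0 \<le> v $ i \<and> v $ i < (if i \<in> Sc then b i else 1)" by auto
      then show "v \<in> ?P" by fastforce
    qed
    show "\<exists>r\<in>?R. p - r \<in> ?L" if p: "p \<in> ?P" for p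
    proof -
      define r where "r = vec d (\<lambda>i. if i \<in> Sc then p $ i mod b i else 0)"
      have "r \<in> ?R" unfolding r_def using bpos by auto
      moreover have "p - r = vec d (\<lambda>i. if i \<in> Sc then (p $ i div b i) * b i else 0)"
        unfolding r_def by (rule eq_vecI) (use p in \<open>auto simp: minus_mod_eq_div_mult\<close>)
      then have "p - r \<in> ?L" using Lmem[of "\<lambda>i. p $ i div b i"] by simp
      ultimately show ?thesis by blast
    qed
    show "r = r'" if r: "r \<in> ?R" "r' \<in> ?R" "r - r' \<in> ?L" for r r'
    proof -
      obtain c where c: "r - r' = vec d (\<lambda>i. if i \<in> Sc then c i * b i else 0)" using r(3) Lform by auto
      show "r = r'"
      proof (rule eq_vecI)
        fix i assume "i < dim_vec r'"
        then have i: "i < d" using r by auto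
        have ci: "r $ i - r' $ i = (if i \<in> Sc then c i * b i else 0)"
        proof -
          have "(r - r') $ i = r $ i - r' $ i" using r i by auto
          then show ?thesis using c i by simp
        qed
        show "r $ i = r' $ i"
        proof (cases "i \<in> Sc")
          case True
          have b1: "0 \<le> r $ i" "r $ i < b i" using r i True by auto
          have b2: "0 \<le> r' $ i" "r' $ i < b i" using r i True by auto
          have "\<bar>r $ i - r' $ i\<bar> < \<bar>b i\<bar>" unfolding abs_less_iff using b1 b2 bpos[OF True] by linarith
          then have "c i = 0" using ci True abs_mult_lt_zero by (metis)
          then show ?thesis using ci True by simp
        next
          case False
          have "0 \<le> r $ i" "r $ i < 1" "0 \<le> r' $ i" "r' $ i < 1" using r i False by auto
          then show ?thesis by linarith
        qed
      qed (use r in auto)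
    qed
  qed
  also have "card ?R = (\<Prod>i<d. nat (if i \<in> Sc then b i else 1))" by (rule card_box)
  also have "\<dots> = (\<Prod>i<d. if i \<in> Sc then nat (b i) else 1)" by (rule prod.cong) auto
  also have "\<dots> = (\<Prod>i\<in>{..<d} \<inter> Sc. nat (b i))" by (rule prod.inter_restrict[symmetric]) simp
  also have "{..<d} \<inter> Sc = Sc" using Sc by auto
  finally show ?thesis unfolding b_def .
qed

lemma bbasic_pos:
  fixes X :: "int mat"
  assumes X: "X \<in> carrier_mat d N" and B: "B_basic X"
  shows "\<And>i j. i < d \<Longrightarrow> j < d \<Longrightarrow> i \<noteq> j \<Longrightarrow> X $$ (i,j) = 0"
    and "\<And>i. i < d \<Longrightarrow> X $$ (i,i) > 0"
    and "d \<le> N"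
proof -
  have dX: "dim_row X = d" "dim_col X = N" using X by auto
  show diag: "\<And>i j. i < d \<Longrightarrow> j < d \<Longrightarrow> i \<noteq> j \<Longrightarrow> X $$ (i,j) = 0"
    using B dX unfolding B_basic_def by auto
  show dN: "d \<le> N" using B dX unfolding B_basic_def by auto
  have pk: "pick {0..<d} j = j" if "j < d" for j
  proof -
    have "{a\<in>{0..<d}. a < j} = {0..<j}" using that by auto
    then show ?thesis using pick_card_in_set[of j "{0..<d}"] that by simp
  qed
  let ?D = "submatrix X {0..<d} {0..<d}"
  have r: "{i. i < dim_row X \<and> i \<in> {0..<d}} = {0..<d}" using dX by auto
  have c: "{i. i < dim_col X \<and> i \<in> {0..<d}} = {0..<d}" using dX dN by auto
  have D: "?D \<in> carrier_mat d d" by (rule carrier_matI) (unfold dim_submatrix r c, simp_all)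
  have Di: "?D $$ (i,j) = X $$ (i,j)" if "i < d" "j < d" for i j
    using submatrix_index[of i X "{0..<d}" j "{0..<d}"] r c that pk by simp
  have "det ?D = prod_list (diag_mat ?D)"
    by (rule det_lower_triangular[OF _ D]) (use Di diag in auto)
  also have "\<dots> = (\<Prod>i=0..<d. X $$ (i,i))" using D Di by (simp add: prod_list_diag_prod)
  finally have "(\<Prod>i=0..<d. X $$ (i,i)) \<noteq> 0" using B dX unfolding B_basic_def by simp
  then have nz: "X $$ (i,i) \<noteq> 0" if "i < d" for i using that by (auto simp: prod_zero_iff)
  show "\<And>i. i < d \<Longrightarrow> X $$ (i,i) > 0"
  proof -
    fix i assume i: "i < d"
    have "X $$ (i,i) \<ge> 0" using B dX i unfolding B_basic_def by auto
    then show "X $$ (i,i) > 0" using nz[OF i] by simp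
  qed
qed



lemma det_block:
  fixes X :: "int mat"
  assumes X: "X \<in> carrier_mat d N" and dN: "d \<le> N"
    and diag: "\<And>i j. i < d \<Longrightarrow> j < d \<Longrightarrow> i \<noteq> j \<Longrightarrow> X $$ (i,j) = 0"
    and I: "I \<subseteq> {0..<d}" and J: "J \<subseteq> {d..<N}" and IJ: "card I = card J"
  shows "\<bar>det (submatrix X UNIV (({0..<d} - I) \<union> J))\<bar>
       = \<bar>\<Prod>k\<in>{0..<d} - I. X $$ (k,k)\<bar> * \<bar>det (submatrix X I J)\<bar>"
proof -
  define Sc where "Sc = {0..<d} - I"
  define S where "S = Sc \<union> J"
  define s where "s = card Sc"
  define t where "t = card I"
  have finI: "finite I" using I finite_subset by blast
  have finJ: "finite J" using J finite_subset by blast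
  have finSc: "finite Sc" unfolding Sc_def by simp
  have ScI: "Sc \<inter> I = {}" "Sc \<union> I = {0..<d}" unfolding Sc_def using I by auto
  have st: "s + t = d" unfolding s_def t_def using card_Un_disjoint[OF finSc finI ScI(1)] ScI(2) by simp
  have ltJ: "a < b" if "a \<in> Sc" "b \<in> J" for a b using that J unfolding Sc_def by auto
  have ScJ: "Sc \<inter> J = {}" using ltJ by fastforce
  have cS: "card S = d" unfolding S_def using card_Un_disjoint[OF finSc finJ ScJ] st IJ s_def t_def by simp
  have SN: "S \<subseteq> {0..<N}" unfolding S_def Sc_def using J dN by auto
  let ?T = "submatrix X UNIV S"
  have T: "?T \<in> carrier_mat d d" using subm_props(1)[OF X SN] cS by simp
  have Ti: "?T $$ (i,j) = X $$ (i, pick S j)" if "i < d" "j < d" for i j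
    using subm_props(2)[OF X SN] that cS by simp
  have pS1: "pick S j = pick Sc j" if "j < s" for j
    unfolding S_def by (rule pick_union_low[OF finSc ltJ]) (use that s_def in auto)
  have pS2: "pick S j = pick J (j - s)" if "s \<le> j" "j < d" for j
  proof -
    have "pick S (s + (j - s)) = pick J (j - s)"
      unfolding S_def s_def by (rule pick_union_high[OF finSc finJ ltJ]) (use that st IJ t_def s_def in auto)
    then show ?thesis using that by simp
  qed
  have pSc: "pick Sc j \<in> Sc" if "j < s" for j using pick_in_set_le[of j Sc] that s_def by simp
  have pI: "pick I j \<in> I" if "j < t" for j using pick_in_set_le[of j I] that t_def by simp
  have pJ: "pick J j \<in> J" if "j < t" for j using pick_in_set_le[of j J] that t_def IJ by simp
  define \<sigma> where "\<sigma> i = (if i < s then pick Sc i else if i < d then pick I (i - s) else i)" for i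
  have \<sigma>d: "\<sigma> i < d" if "i < d" for i
  proof (cases "i < s")
    case True then show ?thesis using pSc[OF True] unfolding \<sigma>_def Sc_def by auto
  next
    case False then have "i - s < t" using that st by auto
    then show ?thesis using pI[of "i - s"] that False I unfolding \<sigma>_def by auto
  qed
  have inj\<sigma>: "inj_on \<sigma> {0..<d}"
  proof (rule inj_onI)
    fix x y assume xy: "x \<in> {0..<d}" "y \<in> {0..<d}" "\<sigma> x = \<sigma> y"
    show "x = y"
    proof (cases "x < s"; cases "y < s")
      assume "x < s" "y < s"
      then show ?thesis using xy pick_inj_eq[OF finSc, of x y] s_def unfolding \<sigma>_def by auto
    next
      assume a: "x < s" "\<not> y < s"
      have "\<sigma> x \<in> Sc" using pSc[of x] a unfolding \<sigma>_def by simp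
      moreover have "\<sigma> y \<in> I" using pI[of "y - s"] a xy st unfolding \<sigma>_def by auto
      ultimately show ?thesis using xy(3) ScI(1) by auto
    next
      assume a: "\<not> x < s" "y < s"
      have "\<sigma> y \<in> Sc" using pSc[of y] a unfolding \<sigma>_def by simp
      moreover have "\<sigma> x \<in> I" using pI[of "x - s"] a xy st unfolding \<sigma>_def by auto
      ultimately show ?thesis using xy(3) ScI(1) by auto
    next
      assume a: "\<not> x < s" "\<not> y < s"
      then have "pick I (x - s) = pick I (y - s)" using xy unfolding \<sigma>_def by auto
      then have "x - s = y - s" using pick_inj_eq[OF finI, of "x - s" "y - s"] a xy st t_def by auto
      then show ?thesis using a by auto
    qed
  qed
  have perm: "\<sigma> permutes {0..<d}"
  proof (rule bij_imp_permutes)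
    have "\<sigma> ` {0..<d} = {0..<d}" by (rule endo_inj_surj) (use \<sigma>d inj\<sigma> in auto)
    then show "bij_betw \<sigma> {0..<d} {0..<d}" using inj\<sigma> by (simp add: bij_betw_def)
    show "\<sigma> x = x" if "x \<notin> {0..<d}" for x using that st unfolding \<sigma>_def by auto
  qed
  let ?M = "mat d d (\<lambda>(i,j). ?T $$ (\<sigma> i, j))"
  have detM: "det ?M = signof \<sigma> * det ?T" by (rule det_permute_rows[OF T perm])
  define D where "D = mat s s (\<lambda>(i,j). if i = j then X $$ (pick Sc i, pick Sc i) else 0)"
  define U where "U = mat s t (\<lambda>(i,j). X $$ (pick Sc i, pick J j))"
  let ?A = "submatrix X I J"
  have rI: "{i. i < dim_row X \<and> i \<in> I} = I" using X I by auto
  have cJ: "{j. j < dim_col X \<and> j \<in> J} = J" using X J by auto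
  have A: "?A \<in> carrier_mat t t"
    by (rule carrier_matI) (unfold dim_submatrix rI cJ, simp_all add: t_def IJ)
  have Ai: "?A $$ (i,j) = X $$ (pick I i, pick J j)" if "i < t" "j < t" for i j
    using submatrix_index[of i X I j J] rI cJ that t_def IJ by simp
  have D: "D \<in> carrier_mat s s" unfolding D_def by simp
  have U: "U \<in> carrier_mat s t" unfolding U_def by simp
  have Meq: "?M = four_block_mat D U (0\<^sub>m t s) ?A"
  proof (rule eq_matI)
    show "dim_row ?M = dim_row (four_block_mat D U (0\<^sub>m t s) ?A)" using D A st by simp
    show "dim_col ?M = dim_col (four_block_mat D U (0\<^sub>m t s) ?A)" using D A st by simp
    fix i j assume "i < dim_row (four_block_mat D U (0\<^sub>m t s) ?A)" "j < dim_col (four_block_mat D U (0\<^sub>m t s) ?A)"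
    then have ij: "i < d" "j < d" using D A st by auto
    have lhs: "?M $$ (i,j) = X $$ (\<sigma> i, pick S j)" using ij Ti \<sigma>d by simp
    have rhs: "four_block_mat D U (0\<^sub>m t s) ?A $$ (i,j) = (if i < s then
      if j < s then D $$ (i,j) else U $$ (i,j - s)
      else if j < s then 0\<^sub>m t s $$ (i - s, j) else ?A $$ (i - s, j - s))"
      using D A ij st by (subst index_mat_four_block) auto
    show "?M $$ (i,j) = four_block_mat D U (0\<^sub>m t s) ?A $$ (i,j)"
    proof (cases "i < s"; cases "j < s")
      assume a: "i < s" "j < s"
      have "pick Sc i < d" "pick Sc j < d" using pSc a unfolding Sc_def by auto
      then show ?thesis using a lhs rhs pS1 diag[of "pick Sc i" "pick Sc j"] pick_inj_eq[OF finSc, of i j]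
        s_def unfolding \<sigma>_def D_def by auto
    next
      assume a: "i < s" "\<not> j < s"
      then show ?thesis using a lhs rhs pS2 ij st unfolding \<sigma>_def U_def by auto
    next
      assume a: "\<not> i < s" "j < s"
      have m: "i - s < t" using a ij st by auto
      have "pick I (i - s) \<in> I" "pick Sc j \<in> Sc" using pI[OF m] pSc[OF a(2)] by auto
      then have ne: "pick I (i - s) \<noteq> pick Sc j" "pick I (i - s) < d" "pick Sc j < d"
        using ScI I unfolding Sc_def by auto
      show ?thesis using a lhs rhs pS1 ij m diag[OF ne(2,3,1)] unfolding \<sigma>_def by auto
    next
      assume a: "\<not> i < s" "\<not> j < s"
      have m: "i - s < t" "j - s < t" using a ij st by auto
      show ?thesis using a lhs rhs pS2 ij Ai[OF m] unfolding \<sigma>_def by auto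
    qed
  qed
  have "det ?M = det D * det ?A"
    unfolding Meq by (rule det_four_block_mat_lower_left_zero[OF D U _ A]) simp
  also have "det D = (\<Prod>i=0..<s. X $$ (pick Sc i, pick Sc i))"
  proof -
    have "det D = prod_list (diag_mat D)"
      by (rule det_lower_triangular[OF _ D]) (auto simp: D_def)
    then show ?thesis using D by (simp add: prod_list_diag_prod D_def)
  qed
  also have "(\<Prod>i=0..<s. X $$ (pick Sc i, pick Sc i)) = (\<Prod>k\<in>Sc. X $$ (k,k))"
    using prod.reindex_bij_betw[OF bij_pick0[OF finSc], of "\<lambda>k. X $$ (k,k)"] s_def by simp
  finally have "det ?M = (\<Prod>k\<in>Sc. X $$ (k,k)) * det ?A" .
  moreover have "\<bar>det ?M\<bar> = \<bar>det ?T\<bar>"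
  proof -
    have "\<bar>(signof \<sigma> :: int)\<bar> = 1" using signof_pm_one[of \<sigma>] by auto
    then show ?thesis unfolding detM by (simp add: abs_mult)
  qed
  ultimately show ?thesis unfolding Sc_def S_def by (simp add: abs_mult)
qed



lemma mult_full:
  fixes Y :: "int mat"
  assumes Y: "Y \<in> carrier_mat d N" and S: "S \<subseteq> {0..<N}" "card S = d"
    and dY: "det (submatrix Y UNIV S) \<noteq> 0"
  shows "am_mult Y S = nat \<bar>det (submatrix Y UNIV S)\<bar>"
proof -
  let ?Z = "submatrix Y UNIV S"
  have Z: "?Z \<in> carrier_mat d d" using subm_props(1)[OF Y S(1)] S(2) by simp
  have "am_mult Y S = am_mult ?Z {0..<d}" using am_sub(1)[OF Y S(1)] S(2) by simp
  also have "\<dots> = card {{v + w | w. w \<in> int_col_span ?Z {0..<d}} | v. v \<in> carrier_vec d}"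
    unfolding am_mult_def square_span_full[OF Z dY] ..
  also have "\<dots> = nat \<bar>det ?Z\<bar>" by (rule index_det[OF Z dY])
  finally show ?thesis .
qed

lemma rank_full:
  fixes Y :: "int mat"
  assumes Y: "Y \<in> carrier_mat d N" and S: "S \<subseteq> {0..<N}" "card S = d"
  shows "am_rk Y S = d \<longleftrightarrow> det (submatrix Y UNIV S) \<noteq> 0"
proof -
  let ?Z = "submatrix Y UNIV S"
  have Z: "?Z \<in> carrier_mat d d" using subm_props(1)[OF Y S(1)] S(2) by simp
  have "am_rk Y S = am_rk ?Z {0..<d}" using am_sub(2)[OF Y S(1)] S(2) by simp
  then show ?thesis using square_rank[OF Z] by simp
qed

theorem lemma3p4:
  fixes X X' :: "int mat" and d N :: nat
  assumes "X \<in> carrier_mat d N" and "X' \<in> carrier_mat d N"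
    and "am_rk X {0..<N} = d"
    and "B_basic X" and "B_basic X'"
    and "same_arith_matroid X X'"
    and "I \<subseteq> {0..<d}" and "J \<subseteq> {d..<N}" and "card I = card J"
    and "det (submatrix X I J) \<noteq> 0"
  shows "\<bar>det (submatrix X I J)\<bar> = \<bar>det (submatrix X' I J)\<bar>"
proof -
  note X = assms(1) and X' = assms(2) and I = assms(7) and J = assms(8) and IJ = assms(9)
  note diag = bbasic_pos(1)[OF X assms(4)] and pos = bbasic_pos(2)[OF X assms(4)]
    and dN = bbasic_pos(3)[OF X assms(4)]
  note diag' = bbasic_pos(1)[OF X' assms(5)] and pos' = bbasic_pos(2)[OF X' assms(5)]
  define Sc where "Sc = {0..<d} - I"
  define S where "S = Sc \<union> J"
  have finI: "finite I" using I finite_subset by blast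
  have finJ: "finite J" using J finite_subset by blast
  have finSc: "finite Sc" unfolding Sc_def by simp
  have ScI: "Sc \<inter> I = {}" "Sc \<union> I = {0..<d}" unfolding Sc_def using I by auto
  have cSc: "card Sc + card I = d" using card_Un_disjoint[OF finSc finI ScI(1)] ScI(2) by simp
  have ScJ: "Sc \<inter> J = {}" using J unfolding Sc_def by auto
  have cS: "card S = d" unfolding S_def using card_Un_disjoint[OF finSc finJ ScJ] cSc IJ by simp
  have SN: "S \<subseteq> {0..<N}" unfolding S_def Sc_def using J dN by auto
  have ScN: "Sc \<subseteq> {0..<N}" unfolding Sc_def using dN by auto
  have Scd: "Sc \<subseteq> {0..<d}" unfolding Sc_def by auto
  have dimX: "dim_col X = N" using X by simp
  have same: "am_rk X T = am_rk X' T \<and> am_mult X T = am_mult X' T" if "T \<subseteq> {0..<N}" for T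
    using assms(6) that dimX unfolding same_arith_matroid_def by auto
  have ScP: "X $$ (k,k) > 0" "X' $$ (k,k) > 0" if "k \<in> Sc" for k
  proof -
    have "k < d" using that Scd by auto
    then show "X $$ (k,k) > 0" "X' $$ (k,k) > 0" using pos pos' by auto
  qed
  define P where "P = (\<Prod>k\<in>Sc. X $$ (k,k))"
  define P' where "P' = (\<Prod>k\<in>Sc. X' $$ (k,k))"
  have Ppos: "P > 0" unfolding P_def using ScP by (intro prod_pos) auto
  have P'pos: "P' > 0" unfolding P'_def using ScP by (intro prod_pos) auto
  have "(\<Prod>k\<in>Sc. nat (X $$ (k,k))) = (\<Prod>k\<in>Sc. nat (X' $$ (k,k)))"
    using diag_mult[OF X dN diag pos Scd] diag_mult[OF X' dN diag' pos' Scd] same[OF ScN] by simp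
  then have "int (\<Prod>k\<in>Sc. nat (X $$ (k,k))) = int (\<Prod>k\<in>Sc. nat (X' $$ (k,k)))" by simp
  moreover have "int (\<Prod>k\<in>Sc. nat (X $$ (k,k))) = P"
    unfolding P_def of_nat_prod using ScP by (intro prod.cong) (auto intro: less_imp_le)
  moreover have "int (\<Prod>k\<in>Sc. nat (X' $$ (k,k))) = P'"
    unfolding P'_def of_nat_prod using ScP by (intro prod.cong) (auto intro: less_imp_le)
  ultimately have PP: "P = P'" by simp
  have bX: "\<bar>det (submatrix X UNIV S)\<bar> = \<bar>P\<bar> * \<bar>det (submatrix X I J)\<bar>"
    unfolding S_def Sc_def P_def by (rule det_block[OF X dN diag I J IJ])
  have bX': "\<bar>det (submatrix X' UNIV S)\<bar> = \<bar>P'\<bar> * \<bar>det (submatrix X' I J)\<bar>"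
    unfolding S_def Sc_def P'_def by (rule det_block[OF X' dN diag' I J IJ])
  have dT: "det (submatrix X UNIV S) \<noteq> 0" using bX Ppos assms(10) by auto
  have "am_rk X S = d" using rank_full[OF X SN cS] dT by simp
  then have "am_rk X' S = d" using same[OF SN] by simp
  then have dT': "det (submatrix X' UNIV S) \<noteq> 0" using rank_full[OF X' SN cS] by simp
  have "nat \<bar>det (submatrix X UNIV S)\<bar> = nat \<bar>det (submatrix X' UNIV S)\<bar>"
    using mult_full[OF X SN cS dT] mult_full[OF X' SN cS dT'] same[OF SN] by simp
  then have "\<bar>det (submatrix X UNIV S)\<bar> = \<bar>det (submatrix X' UNIV S)\<bar>" by simp
  then have "\<bar>P\<bar> * \<bar>det (submatrix X I J)\<bar> = \<bar>P\<bar> * \<bar>det (submatrix X' I J)\<bar>"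
    using bX bX' PP by simp
  then show ?thesis using Ppos by simp
qed


end
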